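(* Let ${\mathsf K},{\mathsf N}$ be positive integers, ${\mathsf q}$ a prime power, and $t\in\{0,1,\ldots,{\mathsf K}\}$. For every file length ${\mathsf B}$ that is a multiple of $\binom{{\mathsf K}}{t}$, there exists an uncoded cache placement in which each user stores ${\mathsf M}{\mathsf B}$ symbols with ${\mathsf M}=\frac{{\mathsf N}t}{{\mathsf K}}$, together with, for every demand matrix $\mathbb{D}\in\mathbb{F}_{\mathsf q}^{{\mathsf K}\times{\mathsf N}}$, a delivery (encoding and decoding functions) under which every user $k$ correctly decodes its demanded function and the load is $$\mathsf R(\mathbb{D})=\frac{\binom{{\mathsf K}}{t+1}-\binom{{\mathsf K}-\mathrm{rank}_{\mathsf q}(\mathbb{D})}{t+1}}{\binom{{\mathsf K}}{t}}.$$ In particular the worst-case load of this scheme equals $\frac{\binom{{\mathsf K}}{t+1}-\binom{{\mathsf K}-\min\{{\mathsf K},{\mathsf N}\}}{t+1}}{\binom{{\mathsf K}}{t}}$, attained by demand matrices of rank $\min\{{\mathsf K},{\mathsf N}\}$.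
   Context: Shared-link cache-aided scalar linear function retrieval problem with parameters $({\mathsf K},{\mathsf N},{\mathsf M},{\mathsf q})$: a server holds ${\mathsf N}$ files $F_1,\ldots,F_{\mathsf N}$, each a vector of ${\mathsf B}$ independent uniformly distributed symbols of $\mathbb{F}_{\mathsf q}$, and is connected to ${\mathsf K}$ users by an error-free broadcast link. Placement phase: user $k$ stores $Z_k=\phi_k(F_1,\ldots,F_{\mathsf N})\in\mathbb{F}_{\mathsf q}^{{\mathsf B}{\mathsf M}}$, chosen without knowledge of demands. Delivery phase: user $k$ demands the row vector $\mathbf y_k=(y_{k,1},\ldots,y_{k,{\mathsf N}})\in\mathbb{F}_{\mathsf q}^{\mathsf N}$, i.e. wants $y_{k,1}F_1+\cdots+y_{k,{\mathsf N}}F_{\mathsf N}$; the demand matrix is $\mathbb{D}=[\mathbf y_1;\ldots;\mathbf y_{\mathsf K}]\in\mathbb{F}_{\mathsf q}^{{\mathsf K}\times{\mathsf N}}$. The server broadcasts $X=\psi(\mathbb{D},F_1,\ldots,F_{\mathsf N})\in\mathbb{F}_{\mathsf q}^{{\mathsf B}{\mathsf R}}$, and each user $k$ must compute $y_{k,1}F_1+\cdots+y_{k,{\mathsf N}}F_{\mathsf N}=\xi_k(\mathbb{D},Z_k,X)$ for all file realizations. ${\mathsf R}$ is the load (transmitted symbols divided by ${\mathsf B}$). A placement is uncoded if each $Z_k$ consists of a subset of the symbols of the files, copied directly. The worst-case load of a scheme is the maximum load over all demand matrices. $\binom{x}{y}=0$ if $x<y$ or $x<0$ or $y<0$. $\mathrm{rank}_{\mathsf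 q}$ denotes rank over $\mathbb{F}_{\mathsf q}$. *)

theory Defs
  imports Complex_Main "Jordan_Normal_Form.DL_Rank"
begin

text \<open>Files: F i j is symbol j (j < B) of file i (i < N).  Only entries with
  i < N and j < B are meaningful; the truncation below makes this explicit.\<close>

definition trunc_files :: "nat \<Rightarrow> nat \<Rightarrow> (nat \<Rightarrow> nat \<Rightarrow> 'a::zero) \<Rightarrow> nat \<Rightarrow> nat \<Rightarrow> 'a" where
  "trunc_files N B F = (\<lambda>i j. if i < N \<and> j < B then F i j else 0)"

definition uncoded_cache :: "(nat \<times> nat) set \<Rightarrow> (nat \<Rightarrow> nat \<Rightarrow> 'a::zero) \<Rightarrow> nat \<times> nat \<Rightarrow> 'a" where
  "uncoded_cache S F = (\<lambda>p. if p \<in> S then F (fst p) (snd p) else 0)"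

definition transmit :: "nat \<Rightarrow> (nat \<Rightarrow> 'a::zero) \<Rightarrow> nat \<Rightarrow> 'a" where
  "transmit L X = (\<lambda>l. if l < L then X l else 0)"

definition demanded :: "nat \<Rightarrow> 'a::field mat \<Rightarrow> nat \<Rightarrow> (nat \<Rightarrow> nat \<Rightarrow> 'a) \<Rightarrow> nat \<Rightarrow> 'a" where
  "demanded N D k F j = (\<Sum>i<N. D $$ (k, i) * F i j)"

text \<open>Rank over the field 'a (column rank, which equals row rank).\<close>
abbreviation rank_q :: "'a::field mat \<Rightarrow> nat" where
  "rank_q D \<equiv> vec_space.rank (dim_row D) D"

end

theory Submission
  imports Defs
begin
lemma tw_filter: "sorted xs \<Longrightarrow> takeWhile (\<lambda>x. x<(k::nat)) xs = filter (\<lambda>x. x<k) xs"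
proof (induction xs)
  case (Cons a xs)
  show ?case
  proof (cases "a < k")
    case False
    then have "\<forall>x\<in>set xs. \<not> x < k" using Cons.prems by auto
    then show ?thesis using False by simp
  qed (use Cons in auto)
qed simp

lemma dw_ge: "sorted xs \<Longrightarrow> y \<in> set (dropWhile (\<lambda>x. x<(k::nat)) xs) \<Longrightarrow> k \<le> y"
  by (induction xs) (auto split: if_splits)

lemma sl_insert:
  fixes T :: "nat set"
  assumes fin: "finite T" and kT: "k \<notin> T"
  shows "sorted_list_of_set (insert k T) =
    take (card {m\<in>T. m<k}) (sorted_list_of_set T) @ k # drop (card {m\<in>T. m<k}) (sorted_list_of_set T)"
proof -
  define xs where "xs = sorted_list_of_set T"
  define p where "p = card {m\<in>T. m<k}"
  have sx: "sorted xs" "distinct xs" "set xs = T" using fin by (auto simp: xs_def)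
  have tw: "takeWhile (\<lambda>x. x<k) xs = filter (\<lambda>x. x<k) xs" using tw_filter sx by blast
  have "{x. x<k} \<inter> T = {m\<in>T. m<k}" by auto
  then have lf: "length (filter (\<lambda>x. x<k) xs) = p"
    using distinct_length_filter[OF sx(2)] sx(3) unfolding p_def by simp
  have tk: "take p xs = takeWhile (\<lambda>x. x<k) xs"
    using lf takeWhile_eq_take tw by metis
  have dk: "drop p xs = dropWhile (\<lambda>x. x<k) xs"
    using dropWhile_eq_drop lf tw by metis
  have a1: "\<forall>x\<in>set (take p xs). x < k" unfolding tk by (blast dest: set_takeWhileD)
  have a2: "\<forall>x\<in>set (drop p xs). k < x"
  proof
    fix x assume x: "x \<in> set (drop p xs)"
    then have "k \<le> x" using dk dw_ge[OF sx(1)] by simp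
    moreover have "x \<in> T" using x sx(3) in_set_dropD by fast
    ultimately show "k < x" using kT by (cases "k = x") auto
  qed
  define ys where "ys = take p xs @ k # drop p xs"
  have sw: "sorted_wrt (<) xs" using sx by (simp add: strict_sorted_iff)
  have "sorted_wrt (<) (take p xs)" "sorted_wrt (<) (drop p xs)"
    using sw by (simp_all add: sorted_wrt_take sorted_wrt_drop)
  moreover have "\<forall>x\<in>set (take p xs). \<forall>y\<in>set (drop p xs). x < y"
    using sw append_take_drop_id[of p xs] sorted_wrt_append[of "(<)" "take p xs" "drop p xs"] by simp
  ultimately have "sorted_wrt (<) ys" unfolding ys_def using a1 a2
    by (auto simp: sorted_wrt_append)
  moreover have "set ys = insert k T" unfolding ys_def using sx(3) append_take_drop_id[of p xs]
    set_append[of "take p xs" "drop p xs"] by auto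
  moreover have "finite (insert k T)" using fin by simp
  ultimately have "sorted_list_of_set (insert k T) = ys"
    by (metis sorted_list_of_set.idem_if_sorted_distinct strict_sorted_iff)
  then show ?thesis unfolding ys_def xs_def p_def .
qed

abbreviation sl :: "nat set \<Rightarrow> nat list" where "sl S \<equiv> sorted_list_of_set S"

definition eps :: "nat \<Rightarrow> nat set \<Rightarrow> 'a::comm_ring_1" where
  "eps k S = (-1) ^ card {m\<in>S. m<k}"

lemma sl_insert_nth:
  fixes T :: "nat set"
  assumes fin: "finite T" and kT: "k \<notin> T"
  defines "p \<equiv> card {m\<in>T. m<k}"
  shows "p \<le> card T" "sl (insert k T) ! p = k"
    "\<And>b. b < card T \<Longrightarrow> sl (insert k T) ! (if b < p then b else Suc b) = sl T ! b"
proof -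
  show pl: "p \<le> card T" unfolding p_def using fin by (intro card_mono) auto
  have len: "length (sl T) = card T" using fin by simp
  have eq: "sl (insert k T) = take p (sl T) @ k # drop p (sl T)"
    unfolding p_def using sl_insert[OF fin kT] .
  show "sl (insert k T) ! p = k" unfolding eq using pl len by (simp add: nth_append)
  fix b assume b: "b < card T"
  show "sl (insert k T) ! (if b < p then b else Suc b) = sl T ! b"
    unfolding eq using pl len b by (auto simp: nth_append min_def)
qed

definition wdet :: "(nat \<Rightarrow> nat \<Rightarrow> 'a::comm_ring_1) \<Rightarrow> nat \<Rightarrow> nat set \<Rightarrow> 'a" where
  "wdet v n S = det (mat n n (\<lambda>(a,b). v a (sl S ! b)))"

definition dl :: "(nat \<Rightarrow> nat \<Rightarrow> 'a::comm_ring_1) \<Rightarrow> nat \<Rightarrow> nat \<Rightarrow> nat set \<Rightarrow> 'a" where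
  "dl v t a T = det (mat t t (\<lambda>(a',b). v (if a' < a then a' else Suc a') (sl T ! b)))"

definition EE :: "(nat \<Rightarrow> nat \<Rightarrow> 'a::comm_ring_1) \<Rightarrow> nat \<Rightarrow> nat \<Rightarrow> nat set \<Rightarrow> 'a" where
  "EE v t k T = (\<Sum>a<Suc t. v a k * (-1)^a * dl v t a T)"

lemma L1:
  fixes T :: "nat set"
  assumes fin: "finite T" and kT: "k \<notin> T" and ct: "card T = t"
  shows "eps k (insert k T) * wdet v (Suc t) (insert k T) = EE v t k T"
proof -
  define p where "p = card {m\<in>T. m<k}"
  note nth = sl_insert_nth[OF fin kT, folded p_def, unfolded ct]
  define M where "M = mat (Suc t) (Suc t) (\<lambda>(a,b). v a (sl (insert k T) ! b))"
  have M: "M \<in> carrier_mat (Suc t) (Suc t)" unfolding M_def by simp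
  have p: "p < Suc t" using nth(1) by simp
  have eps: "eps k (insert k T) = ((-1)^p :: 'a)"
    unfolding eps_def p_def using kT by (auto intro!: arg_cong[where f="\<lambda>x. (-1)^x"] arg_cong[where f=card])
  have del: "mat_delete M a p = mat t t (\<lambda>(a',b). v (if a' < a then a' else Suc a') (sl T ! b))" for a
    unfolding mat_delete_def M_def
    by (rule eq_matI) (auto simp: nth(3) simp del: if_image_distrib)
  have "det M = (\<Sum>a<Suc t. M $$ (a,p) * cofactor M a p)"
    by (rule laplace_expansion_column[OF M p])
  also have "\<dots> = (\<Sum>a<Suc t. v a k * ((-1)^(a+p) * dl v t a T))"
    by (intro sum.cong refl) (simp only: cofactor_def del, simp add: M_def p nth(2) dl_def)
  finally have dM: "det M = (\<Sum>a<Suc t. v a k * ((-1)^(a+p) * dl v t a T))" .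
  have "eps k (insert k T) * wdet v (Suc t) (insert k T) = (-1)^p * det M"
    unfolding wdet_def M_def eps by simp
  also have "\<dots> = (\<Sum>a<Suc t. v a k * (-1)^a * dl v t a T)"
  proof -
    have pp: "((-1::'a)^p) * (-1)^(a+p) = (-1)^a" for a
    proof -
      have "((-1::'a)^p) * (-1)^p = ((-1)*(-1))^p" by (simp add: power_mult_distrib)
      then have "((-1::'a)^p) * (-1)^p = 1" by simp
      then show ?thesis by (simp add: power_add mult.left_commute)
    qed
    show ?thesis unfolding dM sum_distrib_left
      by (intro sum.cong refl) (simp add: pp mult.left_commute mult.assoc flip: mult.assoc[of "(-1)^p"])
  qed
  finally show ?thesis unfolding EE_def .
qed

lemma L2:
  fixes T :: "nat set"
  assumes fin: "finite T" and kT: "k \<in> T" and ct: "card T = t"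
  shows "EE v t k T = 0"
proof -
  define N where "N = mat (Suc t) (Suc t) (\<lambda>(a,b). v a (if b = 0 then k else sl T ! (b - 1)))"
  have N: "N \<in> carrier_mat (Suc t) (Suc t)" unfolding N_def by simp
  have del: "mat_delete N a 0 = mat t t (\<lambda>(a',b). v (if a' < a then a' else Suc a') (sl T ! b))" for a
    unfolding mat_delete_def N_def by (rule eq_matI) auto
  have "det N = (\<Sum>a<Suc t. N $$ (a,0) * cofactor N a 0)"
    by (rule laplace_expansion_column[OF N]) simp
  also have "\<dots> = EE v t k T"
    unfolding EE_def by (intro sum.cong refl) (simp only: cofactor_def del, simp add: N_def dl_def)
  finally have dN: "det N = EE v t k T" .
  obtain q where q: "q < t" "sl T ! q = k"
    using kT fin ct by (metis in_set_conv_nth length_sorted_list_of_set sorted_list_of_set(1))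
  have "col N 0 = col N (Suc q)"
    unfolding N_def using q by (auto simp: col_def)
  then have "det N = 0" by (intro det_identical_columns[OF N, of 0 "Suc q"]) (use q in auto)
  then show ?thesis using dN by simp
qed

definition Subs :: "nat \<Rightarrow> nat \<Rightarrow> nat set set" where
  "Subs K n = {S. S \<subseteq> {..<K} \<and> card S = n}"

lemma finite_Subs[simp]: "finite (Subs K n)"
  unfolding Subs_def by (rule finite_subset[of _ "Pow {..<K}"]) auto

definition Wm :: "'a::comm_ring_1 mat \<Rightarrow> nat \<Rightarrow> (nat \<Rightarrow> nat set \<Rightarrow> 'a) \<Rightarrow> nat set \<Rightarrow> 'a" where
  "Wm D N G S = (\<Sum>k\<in>S. eps k S * (\<Sum>i<N. D $$ (k,i) * G i (S - {k})))"

lemma EE_sum_zero: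
  fixes v :: "nat \<Rightarrow> nat \<Rightarrow> 'a::comm_ring_1" and D :: "'a mat"
  assumes ker: "\<And>a i. a < Suc t \<Longrightarrow> i < N \<Longrightarrow> (\<Sum>k<K. v a k * D $$ (k,i)) = 0"
  shows "(\<Sum>k<K. EE v t k T * (\<Sum>i<N. D $$ (k,i) * G i T)) = 0"
proof -
  have "(\<Sum>k<K. EE v t k T * (\<Sum>i<N. D $$ (k,i) * G i T))
      = (\<Sum>k<K. \<Sum>a<Suc t. \<Sum>i<N. (v a k * D $$ (k,i)) * ((-1)^a * dl v t a T * G i T))"
  proof (rule sum.cong[OF refl])
    fix k
    have "EE v t k T * (\<Sum>i<N. D $$ (k,i) * G i T) = (\<Sum>a<Suc t. v a k * (-1)^a * dl v t a T * (\<Sum>i<N. D $$ (k,i) * G i T))"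
      unfolding EE_def by (rule sum_distrib_right)
    also have "\<dots> = (\<Sum>a<Suc t. \<Sum>i<N. (v a k * D $$ (k,i)) * ((-1)^a * dl v t a T * G i T))"
      by (rule sum.cong[OF refl], subst sum_distrib_left, rule sum.cong[OF refl]) (simp only: mult_ac)
    finally show "EE v t k T * (\<Sum>i<N. D $$ (k,i) * G i T) = (\<Sum>a<Suc t. \<Sum>i<N. (v a k * D $$ (k,i)) * ((-1)^a * dl v t a T * G i T))" .
  qed
  also have "\<dots> = (\<Sum>a<Suc t. \<Sum>i<N. \<Sum>k<K. (v a k * D $$ (k,i)) * ((-1)^a * dl v t a T * G i T))"
    by (subst sum.swap, rule sum.cong[OF refl], rule sum.swap)
  also have "\<dots> = (\<Sum>a<Suc t. \<Sum>i<N. (\<Sum>k<K. v a k * D $$ (k,i)) * ((-1)^a * dl v t a T * G i T))"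
    by (simp only: sum_distrib_right)
  also have "\<dots> = 0" by (simp add: ker)
  finally show ?thesis .
qed

lemma Subs_finite_mem: "S \<in> Subs K n \<Longrightarrow> finite S"
  unfolding Subs_def by (auto intro: finite_subset)

lemma reindex_SK:
  "(\<Sum>S\<in>Subs K (Suc t). \<Sum>k\<in>S. f S k) = (\<Sum>T\<in>Subs K t. \<Sum>k\<in>{..<K} - T. f (insert k T) k)"
proof -
  have "(\<Sum>S\<in>Subs K (Suc t). \<Sum>k\<in>S. f S k) = sum (case_prod f) (Sigma (Subs K (Suc t)) (\<lambda>S. S))"
    by (rule sum.Sigma) (auto intro: Subs_finite_mem)
  also have "\<dots> = sum (\<lambda>(T,k). f (insert k T) k) (Sigma (Subs K t) (\<lambda>T. {..<K} - T))"
  proof (rule sum.reindex_bij_witness[of _ "\<lambda>(T,k). (insert k T, k)" "\<lambda>(S,k). (S - {k}, k)"])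
    fix a assume a: "a \<in> Sigma (Subs K (Suc t)) (\<lambda>S. S)"
    then obtain S k where bk: "a = (S,k)" "S \<in> Subs K (Suc t)" "k \<in> S" by auto
    have fS: "finite S" using bk(2) Subs_finite_mem by blast
    show "(\<lambda>(S,k). (S - {k}, k)) a \<in> Sigma (Subs K t) (\<lambda>T. {..<K} - T)"
      using bk fS by (auto simp: Subs_def)
    show "(\<lambda>(T,k). (insert k T, k)) ((\<lambda>(S,k). (S - {k}, k)) a) = a"
      using bk by (auto simp: insert_absorb)
    show "(\<lambda>(T,k). f (insert k T) k) ((\<lambda>(S,k). (S - {k}, k)) a) = case_prod f a"
      using bk by (auto simp: insert_absorb)
  next
    fix b assume "b \<in> Sigma (Subs K t) (\<lambda>T. {..<K} - T)"
    then obtain T k where ak: "b = (T,k)" "T \<in> Subs K t" "k < K" "k \<notin> T" by auto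
    have fT: "finite T" using ak(2) Subs_finite_mem by blast
    show "(\<lambda>(T,k). (insert k T, k)) b \<in> Sigma (Subs K (Suc t)) (\<lambda>S. S)"
      using ak fT by (auto simp: Subs_def)
    show "(\<lambda>(S,k). (S - {k}, k)) ((\<lambda>(T,k). (insert k T, k)) b) = b"
      using ak by auto
  qed
  also have "\<dots> = (\<Sum>T\<in>Subs K t. \<Sum>k\<in>{..<K} - T. f (insert k T) k)"
    by (rule sum.Sigma[symmetric]) (auto intro: Subs_finite_mem)
  finally show ?thesis .
qed

lemma L4:
  fixes v :: "nat \<Rightarrow> nat \<Rightarrow> 'a::comm_ring_1" and D :: "'a mat"
  assumes ker: "\<And>a i. a < Suc t \<Longrightarrow> i < N \<Longrightarrow> (\<Sum>k<K. v a k * D $$ (k,i)) = 0"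
  shows "(\<Sum>S\<in>Subs K (Suc t). wdet v (Suc t) S * Wm D N G S) = 0"
proof -
  define g where "g k T = (\<Sum>i<N. D $$ (k,i) * G i T)" for k T
  have "(\<Sum>S\<in>Subs K (Suc t). wdet v (Suc t) S * Wm D N G S)
      = (\<Sum>S\<in>Subs K (Suc t). \<Sum>k\<in>S. eps k S * wdet v (Suc t) S * g k (S - {k}))"
  proof (rule sum.cong[OF refl])
    fix S
    have "Wm D N G S = (\<Sum>k\<in>S. eps k S * g k (S - {k}))" unfolding Wm_def g_def ..
    then show "wdet v (Suc t) S * Wm D N G S = (\<Sum>k\<in>S. eps k S * wdet v (Suc t) S * g k (S - {k}))"
      by (simp add: sum_distrib_left mult.left_commute mult.assoc)
  qed
  also have "\<dots> = (\<Sum>T\<in>Subs K t. \<Sum>k\<in>{..<K} - T. eps k (insert k T) * wdet v (Suc t) (insert k T) * g k (insert k T - {k}))"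
    by (rule reindex_SK[where f = "\<lambda>S k. eps k S * wdet v (Suc t) S * g k (S - {k})"])
  also have "\<dots> = (\<Sum>T\<in>Subs K t. \<Sum>k\<in>{..<K} - T. EE v t k T * g k T)"
  proof (rule sum.cong[OF refl], rule sum.cong[OF refl])
    fix T k assume T: "T \<in> Subs K t" and k: "k \<in> {..<K} - T"
    have fT: "finite T" using Subs_finite_mem[OF T] .
    have cT: "card T = t" using T by (simp add: Subs_def)
    have "insert k T - {k} = T" using k by auto
    then show "eps k (insert k T) * wdet v (Suc t) (insert k T) * g k (insert k T - {k}) = EE v t k T * g k T"
      using L1[OF fT _ cT, of k v] k by simp
  qed
  also have "\<dots> = (\<Sum>T\<in>Subs K t. \<Sum>k<K. EE v t k T * g k T)"
  proof (rule sum.cong[OF refl])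
    fix T assume T: "T \<in> Subs K t"
    have fT: "finite T" using Subs_finite_mem[OF T] .
    have cT: "card T = t" using T by (simp add: Subs_def)
    show "(\<Sum>k\<in>{..<K} - T. EE v t k T * g k T) = (\<Sum>k<K. EE v t k T * g k T)"
    proof (rule sum.mono_neutral_left)
      show "\<forall>i\<in>{..<K} - ({..<K} - T). EE v t i T * g i T = 0"
      proof
        fix i assume "i \<in> {..<K} - ({..<K} - T)"
        then have "i \<in> T" by blast
        then show "EE v t i T * g i T = 0" by (simp add: L2[OF fT _ cT, of i v])
      qed
    qed auto
  qed
  also have "\<dots> = 0"
  proof (rule sum.neutral, rule ballI)
    fix T show "(\<Sum>k<K. EE v t k T * g k T) = 0"
      unfolding g_def by (rule EE_sum_zero[OF ker])
  qed
  finally show ?thesis .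
qed

definition vv :: "nat set \<Rightarrow> (nat \<Rightarrow> nat \<Rightarrow> 'a::comm_ring_1) \<Rightarrow> nat set \<Rightarrow> nat \<Rightarrow> nat \<Rightarrow> 'a" where
  "vv L \<alpha> S0 a s = (if s = sl S0 ! a then 1 else 0) - (if s \<in> L then \<alpha> (sl S0 ! a) s else 0)"

lemma vv_ker:
  fixes D :: "'a::comm_ring_1 mat"
  assumes LK: "L \<subseteq> {..<K}" and S0: "S0 \<in> Subs K (Suc t)" and dis: "S0 \<inter> L = {}"
    and span: "\<And>k i. k \<in> S0 \<Longrightarrow> i < N \<Longrightarrow> D $$ (k,i) = (\<Sum>l\<in>L. \<alpha> k l * D $$ (l,i))"
    and a: "a < Suc t" and i: "i < N"
  shows "(\<Sum>k<K. vv L \<alpha> S0 a k * D $$ (k,i)) = 0"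
proof -
  define ka where "ka = sl S0 ! a"
  have fS0: "finite S0" using Subs_finite_mem[OF S0] .
  have len: "length (sl S0) = Suc t" using S0 fS0 by (simp add: Subs_def)
  have "ka \<in> set (sl S0)" unfolding ka_def using a len by (simp only: nth_mem)
  then have kaS0: "ka \<in> S0" using fS0 by simp
  then have kaK: "ka < K" using S0 by (auto simp: Subs_def)
  have eq: "vv L \<alpha> S0 a k * D $$ (k,i) = (if k = ka then D $$ (k,i) else 0) - (if k \<in> L then \<alpha> ka k * D $$ (k,i) else 0)" for k
    unfolding vv_def ka_def[symmetric] by (simp add: left_diff_distrib)
  have "(\<Sum>k<K. vv L \<alpha> S0 a k * D $$ (k,i))
     = (\<Sum>k<K. (if k = ka then D $$ (k,i) else 0)) - (\<Sum>k<K. (if k \<in> L then \<alpha> ka k * D $$ (k,i) else 0))"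
    unfolding eq by (rule sum_subtractf)
  also have "(\<Sum>k<K. (if k = ka then D $$ (k,i) else 0)) = D $$ (ka,i)"
    using kaK by (simp add: sum.delta)
  also have "(\<Sum>k<K. (if k \<in> L then \<alpha> ka k * D $$ (k,i) else 0)) = (\<Sum>l\<in>L. \<alpha> ka l * D $$ (l,i))"
  proof -
    have "(\<Sum>k<K. (if k \<in> L then \<alpha> ka k * D $$ (k,i) else 0)) = (\<Sum>k\<in>{..<K} \<inter> L. \<alpha> ka k * D $$ (k,i))"
      by (simp add: sum.inter_restrict)
    also have "{..<K} \<inter> L = L" using LK by blast
    finally show ?thesis .
  qed
  finally show ?thesis using span[OF kaS0 i] by simp
qed


lemma wdet_S0:
  assumes S0: "S0 \<in> Subs K (Suc t)" and dis: "S0 \<inter> L = {}"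
  shows "wdet (vv L \<alpha> S0) (Suc t) S0 = 1"
proof -
  have fS0: "finite S0" using Subs_finite_mem[OF S0] .
  have len: "length (sl S0) = Suc t" using S0 fS0 by (simp add: Subs_def)
  have dist: "distinct (sl S0)" by simp
  have mem: "b < Suc t \<Longrightarrow> sl S0 ! b \<in> S0" for b using len fS0
    by (metis nth_mem set_sorted_list_of_set)
  have "mat (Suc t) (Suc t) (\<lambda>(a,b). vv L \<alpha> S0 a (sl S0 ! b)) = 1\<^sub>m (Suc t)"
  proof (rule eq_matI)
    fix a b assume ab: "a < dim_row (1\<^sub>m (Suc t))" "b < dim_col (1\<^sub>m (Suc t))"
    then have "a < Suc t" "b < Suc t" by auto
    moreover have "(sl S0 ! b = sl S0 ! a) = (b = a)" using dist len \<open>a < Suc t\<close> \<open>b < Suc t\<close>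
      by (simp add: nth_eq_iff_index_eq)
    moreover have "sl S0 ! b \<notin> L" using mem[OF \<open>b < Suc t\<close>] dis by blast
    ultimately show "mat (Suc t) (Suc t) (\<lambda>(a,b). vv L \<alpha> S0 a (sl S0 ! b)) $$ (a,b) = 1\<^sub>m (Suc t) $$ (a,b)"
      by (simp add: vv_def)
  qed auto
  then show ?thesis unfolding wdet_def by simp
qed


lemma wdet_other:
  assumes S0: "S0 \<in> Subs K (Suc t)" and S: "S \<in> Subs K (Suc t)" and disS: "S \<inter> L = {}" and ne: "S \<noteq> S0"
  shows "wdet (vv L \<alpha> S0) (Suc t) S = 0"
proof -
  have fS0: "finite S0" using Subs_finite_mem[OF S0] .
  have fS: "finite S" using Subs_finite_mem[OF S] .
  have "\<not> S \<subseteq> S0"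
  proof
    assume "S \<subseteq> S0"
    moreover have "card S = card S0" using S S0 by (simp add: Subs_def)
    ultimately show False using ne fS0 card_subset_eq by blast
  qed
  then obtain s where s: "s \<in> S" "s \<notin> S0" by blast
  have len: "length (sl S) = Suc t" using S fS by (simp add: Subs_def)
  obtain b where b: "b < Suc t" "sl S ! b = s" using s(1) fS len
    by (metis in_set_conv_nth set_sorted_list_of_set)
  have len0: "length (sl S0) = Suc t" using S0 fS0 by (simp add: Subs_def)
  have mem0: "a < Suc t \<Longrightarrow> sl S0 ! a \<in> S0" for a using len0 fS0
    by (metis nth_mem set_sorted_list_of_set)
  define M where "M = mat (Suc t) (Suc t) (\<lambda>(a,b). vv L \<alpha> S0 a (sl S ! b))"
  have M: "M \<in> carrier_mat (Suc t) (Suc t)" unfolding M_def by simp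
  have "det M = (\<Sum>a<Suc t. M $$ (a,b) * cofactor M a b)"
    by (rule laplace_expansion_column[OF M b(1)])
  also have "\<dots> = 0"
  proof (rule sum.neutral, rule ballI)
    fix a assume "a \<in> {..<Suc t}"
    then have a: "a < Suc t" by simp
    have "s \<noteq> sl S0 ! a" using mem0[OF a] s(2) by blast
    moreover have "s \<notin> L" using s(1) disS by blast
    ultimately have "M $$ (a,b) = 0" unfolding M_def using a b by (simp add: vv_def)
    then show "M $$ (a,b) * cofactor M a b = 0" by simp
  qed
  finally show ?thesis unfolding wdet_def M_def .
qed


lemma decode_identity:
  fixes D :: "'a::comm_ring_1 mat"
  assumes LK: "L \<subseteq> {..<K}" and S0: "S0 \<in> Subs K (Suc t)" and dis: "S0 \<inter> L = {}"
    and span: "\<And>k i. k \<in> S0 \<Longrightarrow> i < N \<Longrightarrow> D $$ (k,i) = (\<Sum>l\<in>L. \<alpha> k l * D $$ (l,i))"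
  shows "Wm D N G S0 = - (\<Sum>S\<in>{S\<in>Subs K (Suc t). S \<inter> L \<noteq> {}}. wdet (vv L \<alpha> S0) (Suc t) S * Wm D N G S)"
proof -
  define w where "w S = wdet (vv L \<alpha> S0) (Suc t) S * Wm D N G S" for S
  have z: "(\<Sum>S\<in>Subs K (Suc t). w S) = 0"
    unfolding w_def by (rule L4) (rule vv_ker[OF LK S0 dis span])
  define A where "A = {S\<in>Subs K (Suc t). S \<inter> L \<noteq> {}}"
  define B where "B = {S\<in>Subs K (Suc t). S \<inter> L = {}}"
  have fA: "finite A" "finite B" unfolding A_def B_def by auto
  have "Subs K (Suc t) = A \<union> B" "A \<inter> B = {}" unfolding A_def B_def by auto
  then have "(\<Sum>S\<in>Subs K (Suc t). w S) = sum w A + sum w B"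
    using fA by (simp add: sum.union_disjoint)
  moreover have "sum w B = Wm D N G S0"
  proof -
    have S0B: "S0 \<in> B" unfolding B_def using S0 dis by auto
    have "sum w B = w S0 + sum w (B - {S0})" using fA(2) S0B by (simp add: sum.remove)
    also have "sum w (B - {S0}) = 0"
    proof (rule sum.neutral, rule ballI)
      fix S assume "S \<in> B - {S0}"
      then have "S \<in> Subs K (Suc t)" "S \<inter> L = {}" "S \<noteq> S0" unfolding B_def by auto
      then show "w S = 0" unfolding w_def using wdet_other[OF S0, of S L \<alpha>] by simp
    qed
    also have "w S0 = Wm D N G S0" unfolding w_def using wdet_S0[OF S0 dis, of \<alpha>] by simp
    finally show ?thesis by simp
  qed
  ultimately have "sum w A + Wm D N G S0 = 0" using z by simp
  then show ?thesis unfolding A_def[symmetric] w_def[symmetric] by (simp add: eq_neg_iff_add_eq_0 add.commute)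
qed





definition minor :: "'a::comm_ring_1 mat \<Rightarrow> nat list \<Rightarrow> nat list \<Rightarrow> 'a" where
  "minor D is js = det (mat (length is) (length is) (\<lambda>(a,b). D $$ (is ! a, js ! b)))"

definition valid_minor :: "'a::comm_ring_1 mat \<Rightarrow> nat \<Rightarrow> nat \<Rightarrow> nat list \<Rightarrow> nat list \<Rightarrow> bool" where
  "valid_minor D K N is js \<longleftrightarrow> distinct is \<and> distinct js \<and> set is \<subseteq> {..<K} \<and> set js \<subseteq> {..<N}
     \<and> length js = length is \<and> minor D is js \<noteq> 0"

lemma valid_minor_rank:
  fixes D :: "'a::field mat"
  assumes D: "D \<in> carrier_mat K N" and v: "valid_minor D K N is js"
  shows "length is \<le> vec_space.rank K D"
proof -
  interpret vec_space "TYPE('a)" K .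
  define m where "m = length is"
  have lj: "length js = m" using v unfolding valid_minor_def m_def by simp
  define A where "A = mat K m (\<lambda>(i,b). D $$ (i, js ! b))"
  define M where "M = mat m m (\<lambda>(a,b). D $$ (is ! a, js ! b))"
  have A: "A \<in> carrier_mat K m" unfolding A_def by simp
  have M: "M \<in> carrier_mat m m" unfolding M_def by simp
  have dM: "det M \<noteq> 0" using v unfolding valid_minor_def minor_def M_def m_def by simp
  have jsN: "js ! b < N" if "b < m" for b
  proof -
    have "js ! b \<in> set js" using that lj by simp
    then show ?thesis using v unfolding valid_minor_def by blast
  qed
  have isK: "a < m \<Longrightarrow> is ! a < K" for a using v unfolding valid_minor_def m_def by (auto dest: nth_mem)
  have colA: "b < m \<Longrightarrow> col A b = col D (js ! b)" for b
    using D jsN[of b] unfolding A_def by (auto simp: col_def)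
  have sub: "set (cols A) \<subseteq> set (cols D)"
  proof
    fix x assume "x \<in> set (cols A)"
    then obtain b where b: "b < m" "x = col A b" using A by (auto simp: cols_def)
    then show "x \<in> set (cols D)" using colA[OF b(1)] jsN[OF b(1)] D by (auto simp: cols_def)
  qed
  have dist: "distinct (cols A)"
  proof (rule ccontr)
    assume "\<not> distinct (cols A)"
    then obtain b b' where bb: "b < m" "b' < m" "b \<noteq> b'" "cols A ! b = cols A ! b'"
      using A by (auto simp: distinct_conv_nth)
    then have "col A b = col A b'" using A by simp
    then have "col M b = col M b'"
    proof -
      assume h: "col A b = col A b'"
      show ?thesis
      proof (rule eq_vecI)
        fix a assume "a < dim_vec (col M b')"
        then have a: "a < m" using M by simp
        have "col A b $ (is ! a) = col A b' $ (is ! a)" using h by simp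
        then show "col M b $ a = col M b' $ a" using a bb isK[OF a] unfolding A_def M_def by simp
      qed (use M in simp)
    qed
    then have "det M = 0" using det_identical_columns[OF M bb(3) bb(1) bb(2)] by simp
    then show False using dM by simp
  qed
  have li: "lin_indpt (set (cols A))"
  proof
    assume "lin_dep (set (cols A))"
    then obtain w where w: "w \<in> carrier_vec m" "w \<noteq> 0\<^sub>v m" "A *\<^sub>v w = 0\<^sub>v K"
      using lin_depE[OF A _ dist] by blast
    have "M *\<^sub>v w = 0\<^sub>v m"
    proof (rule eq_vecI)
      fix a assume "a < dim_vec (0\<^sub>v m)"
      then have a: "a < m" by simp
      have "(A *\<^sub>v w) $ (is ! a) = 0" using w(3) isK[OF a] by simp
      moreover have "(A *\<^sub>v w) $ (is ! a) = (M *\<^sub>v w) $ a"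
        using a isK[OF a] w(1) unfolding A_def M_def by (simp add: scalar_prod_def)
      ultimately show "(M *\<^sub>v w) $ a = 0\<^sub>v m $ a" using a by simp
    qed (use M in simp)
    then have "det M = 0" using det_0_iff_vec_prod_zero_field[OF M] w by blast
    then show False using dM by simp
  qed
  have "card (set (cols A)) \<le> rank D" by (rule rank_ge_card_indpt[OF D sub li])
  moreover have "card (set (cols A)) = m" using distinct_card[OF dist] A by simp
  ultimately show ?thesis unfolding m_def by simp
qed


lemma det_mat0: "det (mat 0 0 f) = (1::'a::comm_ring_1)"
proof -
  have "mat 0 0 f = (1\<^sub>m 0 :: 'a mat)" by (rule eq_matI) auto
  then show ?thesis by simp
qed

lemma sum_set_nth:
  assumes "distinct xs"
  shows "(\<Sum>l\<in>set xs. f l) = (\<Sum>a<length xs. f (xs ! a))"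
proof -
  have inj: "inj_on (nth xs) {..<length xs}" using assms by (simp add: inj_on_nth)
  have im: "nth xs ` {..<length xs} = set xs" by (auto simp: in_set_conv_nth)
  show ?thesis using sum.reindex[OF inj, of f] im by simp
qed

lemma border_zero:
  fixes D :: "'a::field mat"
  assumes D: "D \<in> carrier_mat K N" and v: "valid_minor D K N is js"
    and maxv: "\<And>is' js'. valid_minor D K N is' js' \<Longrightarrow> length is' \<le> length is"
    and k: "k < K" "k \<notin> set is" and c: "c < N"
  shows "D $$ (k,c) * minor D is js + (\<Sum>a<length is. D $$ (is ! a, c) *
     ((-1)^(a + length is) * det (mat (length is) (length is) (\<lambda>(a',b'). D $$ ((is @ [k]) ! (if a' < a then a' else Suc a'), js ! b'))))) = 0"
proof -
  define m where "m = length is"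
  have lj: "length js = m" using v unfolding valid_minor_def m_def by simp
  define B where "B = mat (Suc m) (Suc m) (\<lambda>(a,b). D $$ ((is @ [k]) ! a, (js @ [c]) ! b))"
  have B: "B \<in> carrier_mat (Suc m) (Suc m)" unfolding B_def by simp
  have dB: "det B = 0"
  proof (cases "c \<in> set js")
    case True
    then obtain b0 where b0: "b0 < m" "js ! b0 = c" using lj by (auto simp: in_set_conv_nth)
    have "col B b0 = col B m"
      by (rule eq_vecI) (use b0 lj in \<open>auto simp: B_def col_def nth_append\<close>)
    then show ?thesis using det_identical_columns[OF B, of b0 m] b0 by simp
  next
    case False
    show ?thesis
    proof (rule ccontr)
      assume nz: "det B \<noteq> 0"
      have "valid_minor D K N (is @ [k]) (js @ [c])"
        using v k c False nz lj unfolding valid_minor_def minor_def B_def m_def by auto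
      then have "Suc m \<le> m" using maxv[of "is @ [k]" "js @ [c]"] unfolding m_def by simp
      then show False by simp
    qed
  qed
  have cof: "cofactor B a m = (-1)^(a + m) * det (mat m m (\<lambda>(a',b'). D $$ ((is @ [k]) ! (if a' < a then a' else Suc a'), js ! b')))"
    for a
  proof -
    have "mat_delete B a m = mat m m (\<lambda>(a',b'). D $$ ((is @ [k]) ! (if a' < a then a' else Suc a'), js ! b'))"
      unfolding mat_delete_def B_def by (rule eq_matI) (auto simp: nth_append lj)
    then show ?thesis unfolding cofactor_def by simp
  qed
  have Bm: "B $$ (a,m) = (if a < m then D $$ (is ! a, c) else D $$ (k,c))" if "a < Suc m" for a
    using that lj unfolding B_def m_def by (auto simp: nth_append)
  have "det B = (\<Sum>a<Suc m. B $$ (a,m) * cofactor B a m)"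
    by (rule laplace_expansion_column[OF B]) simp
  also have "\<dots> = (\<Sum>a<m. B $$ (a,m) * cofactor B a m) + B $$ (m,m) * cofactor B m m"
    by simp
  also have "B $$ (m,m) * cofactor B m m = D $$ (k,c) * minor D is js"
  proof -
    have "mat m m (\<lambda>(a',b'). D $$ ((is @ [k]) ! (if a' < m then a' else Suc a'), js ! b'))
        = mat m m (\<lambda>(a,b). D $$ (is ! a, js ! b))"
      by (rule eq_matI) (auto simp: nth_append m_def)
    moreover have "((-1::'a)^(m + m)) = 1" by (simp flip: mult_2)
    ultimately show ?thesis unfolding cof minor_def m_def[symmetric] using Bm[of m] by simp
  qed
  also have "(\<Sum>a<m. B $$ (a,m) * cofactor B a m) = (\<Sum>a<m. D $$ (is ! a, c) *
     ((-1)^(a + m) * det (mat m m (\<lambda>(a',b'). D $$ ((is @ [k]) ! (if a' < a then a' else Suc a'), js ! b')))))"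
    by (intro sum.cong refl) (simp add: cof Bm)
  finally show ?thesis using dB unfolding m_def by (simp add: add.commute)
qed


lemma leaders_exist:
  fixes D :: "'a::field mat"
  assumes D: "D \<in> carrier_mat K N"
  shows "\<exists>L \<alpha>. L \<subseteq> {..<K} \<and> card L \<le> vec_space.rank K D \<and>
           (\<forall>k<K. k \<notin> L \<longrightarrow> (\<forall>i<N. D $$ (k,i) = (\<Sum>l\<in>L. \<alpha> k l * D $$ (l,i))))"
proof -
  define P where "P p = valid_minor D K N (fst p) (snd p)" for p
  have P0: "P ([],[])" unfolding P_def valid_minor_def minor_def by (simp add: det_mat0)
  have bnd: "\<forall>p. P p \<longrightarrow> length (fst p) < Suc K"
  proof (intro allI impI)
    fix p assume "P p"
    then have "distinct (fst p)" "set (fst p) \<subseteq> {..<K}" unfolding P_def valid_minor_def by auto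
    then have "card (set (fst p)) \<le> K" by (metis card_lessThan card_mono finite_lessThan)
    then show "length (fst p) < Suc K" using distinct_card[OF \<open>distinct (fst p)\<close>] by simp
  qed
  obtain p where p: "P p" and pmax: "\<forall>y. P y \<longrightarrow> length (fst y) \<le> length (fst p)"
    using ex_has_greatest_nat[OF P0 bnd] by blast
  obtain "is" js where pij: "p = (is, js)" by (cases p)
  have v: "valid_minor D K N is js" using p pij P_def by simp
  have maxv: "length is' \<le> length is" if "valid_minor D K N is' js'" for is' js'
    using pmax that pij unfolding P_def by (metis fst_conv snd_conv)
  define m where "m = length is"
  define d where "d = minor D is js"
  have d: "d \<noteq> 0" using v unfolding valid_minor_def d_def by simp
  define \<gamma> where "\<gamma> k a = (-1)^(a + m) * det (mat m m (\<lambda>(a',b'). D $$ ((is @ [k]) ! (if a' < a then a' else Suc a'), js ! b')))" for k a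
  define \<alpha> where "\<alpha> k l = - \<gamma> k (the_inv_into {..<m} (nth is) l) / d" for k l
  have dist: "distinct is" using v unfolding valid_minor_def by simp
  have inj: "inj_on (nth is) {..<m}" using dist unfolding m_def by (simp add: inj_on_nth)
  show ?thesis
  proof (intro exI conjI allI impI)
    show "set is \<subseteq> {..<K}" using v unfolding valid_minor_def by simp
    show "card (set is) \<le> vec_space.rank K D"
      using valid_minor_rank[OF D v] distinct_card[OF dist] by simp
    fix k i assume k: "k < K" "k \<notin> set is" and i: "i < N"
    have bz: "D $$ (k,i) * d + (\<Sum>a<m. D $$ (is ! a, i) * \<gamma> k a) = 0"
      using border_zero[OF D v maxv k i] unfolding d_def \<gamma>_def m_def by simp
    have "(\<Sum>l\<in>set is. \<alpha> k l * D $$ (l,i)) = (\<Sum>a<m. \<alpha> k (is ! a) * D $$ (is ! a,i))"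
      unfolding m_def by (rule sum_set_nth[OF dist])
    also have "\<dots> = (\<Sum>a<m. - (D $$ (is ! a, i) * \<gamma> k a) / d)"
    proof (intro sum.cong refl)
      fix a assume "a \<in> {..<m}"
      then have "the_inv_into {..<m} (nth is) (is ! a) = a" using the_inv_into_f_f[OF inj] by blast
      then show "\<alpha> k (is ! a) * D $$ (is ! a,i) = - (D $$ (is ! a, i) * \<gamma> k a) / d"
        unfolding \<alpha>_def by (simp add: field_simps)
    qed
    also have "\<dots> = - (\<Sum>a<m. D $$ (is ! a, i) * \<gamma> k a) / d"
      by (simp add: sum_divide_distrib sum_negf)
    also have "\<dots> = D $$ (k,i)"
    proof -
      have "- (\<Sum>a<m. D $$ (is ! a, i) * \<gamma> k a) = D $$ (k,i) * d"
        using bz by (simp add: add_eq_0_iff2 neg_eq_iff_add_eq_0 add.commute)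
      then show ?thesis using d by simp
    qed
    finally show "D $$ (k,i) = (\<Sum>l\<in>set is. \<alpha> k l * D $$ (l,i))" by simp
  qed
qed



lemma rank_le_rows:
  fixes D :: "'a::field mat"
  assumes D: "D \<in> carrier_mat K N"
  shows "vec_space.rank K D \<le> K"
proof -
  interpret vec_space "TYPE('a)" K .
  have sub: "subspace class_ring (span (set (cols D))) V"
    by (metis D cols_dim carrier_matD(1) span_is_subspace)
  have "vectorspace.dim class_ring (vs (span (set (cols D)))) \<le> dim"
    by (rule subspace_dim[OF sub fin_dim fin_dim_span_cols[OF D]])
  then show ?thesis unfolding rank_def dim_is_n .
qed

lemma rank_le_cols:
  fixes D :: "'a::field mat"
  assumes D: "D \<in> carrier_mat K N"
  shows "vec_space.rank K D \<le> N"
  using vec_space.rank_le_nc[OF D] .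

lemma exists_full_rank:
  shows "\<exists>D :: 'a::field mat. D \<in> carrier_mat K N \<and> vec_space.rank K D = min K N"
proof -
  define D :: "'a mat" where "D = mat K N (\<lambda>(i,j). if i = j then 1 else 0)"
  have D: "D \<in> carrier_mat K N" unfolding D_def by simp
  define xs where "xs = [0..<min K N]"
  have "mat (min K N) (min K N) (\<lambda>(a,b). D $$ (xs ! a, xs ! b)) = 1\<^sub>m (min K N)"
    by (rule eq_matI) (auto simp: D_def xs_def)
  then have "minor D xs xs = 1" unfolding minor_def xs_def by simp
  then have "valid_minor D K N xs xs" unfolding valid_minor_def xs_def by auto
  from valid_minor_rank[OF D this] have "min K N \<le> vec_space.rank K D" unfolding xs_def by simp
  moreover have "vec_space.rank K D \<le> min K N" using rank_le_rows[OF D] rank_le_cols[OF D] by simp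
  ultimately show ?thesis using D by (intro exI[of _ D]) simp
qed



lemma card_Subs: "card (Subs K n) = K choose n"
  unfolding Subs_def using n_subsets[of "{..<K}" n] by simp

lemma binom_mono_n:
  assumes "a \<le> b" shows "a choose r \<le> b choose r"
proof -
  have "Subs a r \<subseteq> Subs b r" unfolding Subs_def using assms by auto
  then show ?thesis using card_mono[OF finite_Subs] card_Subs by metis
qed

lemma card_Subs_avoid:
  assumes "L \<subseteq> {..<K}"
  shows "card {S\<in>Subs K n. S \<inter> L = {}} = (K - card L) choose n"
proof -
  have "{S\<in>Subs K n. S \<inter> L = {}} = {S. S \<subseteq> {..<K} - L \<and> card S = n}"
    unfolding Subs_def by auto
  moreover have "card ({..<K} - L) = K - card L"
    using assms by (simp add: card_Diff_subset finite_subset)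
  ultimately show ?thesis using n_subsets[of "{..<K} - L" n] by simp
qed

lemma card_Msg:
  assumes "L \<subseteq> {..<K}"
  shows "card {S\<in>Subs K n. S \<inter> L \<noteq> {}} = (K choose n) - ((K - card L) choose n)"
proof -
  have "{S\<in>Subs K n. S \<inter> L \<noteq> {}} = Subs K n - {S\<in>Subs K n. S \<inter> L = {}}" by auto
  then have "card {S\<in>Subs K n. S \<inter> L \<noteq> {}} = card (Subs K n) - card {S\<in>Subs K n. S \<inter> L = {}}"
    by (simp add: card_Diff_subset)
  then show ?thesis using card_Subs card_Subs_avoid[OF assms] by simp
qed

lemma card_Subs_mem:
  assumes k: "k < K" and t: "0 < t"
  shows "card {T\<in>Subs K t. k \<in> T} = (K - 1) choose (t - 1)"
proof -
  define A where "A = {T'. T' \<subseteq> {..<K} - {k} \<and> card T' = t - 1}"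
  have cA: "card A = (K - 1) choose (t - 1)"
    unfolding A_def using n_subsets[of "{..<K} - {k}" "t - 1"] k by simp
  have inj: "inj_on (insert k) A"
  proof (rule inj_onI)
    fix x y assume "x \<in> A" "y \<in> A" "insert k x = insert k y"
    then have "k \<notin> x" "k \<notin> y" unfolding A_def by auto
    then have "x = insert k x - {k}" "y = insert k y - {k}" by auto
    then show "x = y" using \<open>insert k x = insert k y\<close> by simp
  qed
  have "insert k ` A = {T\<in>Subs K t. k \<in> T}"
  proof
    show "insert k ` A \<subseteq> {T\<in>Subs K t. k \<in> T}"
    proof
      fix T assume "T \<in> insert k ` A"
      then obtain T' where T': "T = insert k T'" "T' \<subseteq> {..<K} - {k}" "card T' = t - 1"
        unfolding A_def by auto
      have "finite T'" using T'(2) finite_subset by blast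
      moreover have "k \<notin> T'" using T'(2) by blast
      ultimately have "card T = t" using T' t by simp
      then show "T \<in> {T\<in>Subs K t. k \<in> T}" using T' k unfolding Subs_def by auto
    qed
    show "{T\<in>Subs K t. k \<in> T} \<subseteq> insert k ` A"
    proof
      fix T assume T: "T \<in> {T\<in>Subs K t. k \<in> T}"
      then have fT: "finite T" using Subs_finite_mem by blast
      have "T = insert k (T - {k})" using T by auto
      moreover have "T - {k} \<in> A" using T fT unfolding A_def Subs_def by auto
      ultimately show "T \<in> insert k ` A" by blast
    qed
  qed
  then show ?thesis using card_image[OF inj] cA by simp
qed

lemma card_Subs_mem_mult:
  assumes k: "k < K"
  shows "card {T\<in>Subs K t. k \<in> T} * K = t * (K choose t)"
proof (cases "t = 0")
  case True
  have "{T\<in>Subs K t. k \<in> T} = {}"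
  proof (rule equals0I)
    fix T assume T: "T \<in> {T\<in>Subs K t. k \<in> T}"
    have "finite T" using Subs_finite_mem T by blast
    moreover have "card T = 0" using T True by (simp add: Subs_def)
    ultimately show False using T by auto
  qed
  then show ?thesis using True by simp
next
  case False
  have "t * (K choose t) = K * ((K - 1) choose (t - 1))"
    by (rule times_binomial_minus1_eq) (use False in simp)
  then show ?thesis using card_Subs_mem[OF k] False by (simp add: mult.commute)
qed



lemma div_mod_block:
  assumes "p < (B'::nat)" shows "(b * B' + p) div B' = b" "(b * B' + p) mod B' = p"
  using assms by auto

lemma block_lt:
  assumes "b < C" "p < (B'::nat)" shows "b * B' + p < C * B'"
proof -
  have "b * B' + p < b * B' + B'" using assms by simp
  also have "\<dots> = Suc b * B'" by simp
  also have "\<dots> \<le> C * B'" using assms(1) by (intro mult_right_mono) auto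
  finally show ?thesis .
qed

lemma cache_card:
  assumes bij: "bij_betw blk {..<C} (Subs K t)" and k: "k < K" and B'0: "0 < B'"
  shows "card {(i,j). i < N \<and> j < C * B' \<and> k \<in> blk (j div B')} * K = N * t * (C * B')"
    and "C = K choose t \<Longrightarrow> card {(i,j). i < N \<and> j < C * B' \<and> k \<in> blk (j div B')} * K = N * t * (C * B')"
proof -
  define J where "J = {j. j < C * B' \<and> k \<in> blk (j div B')}"
  define Bs where "Bs = {b\<in>{..<C}. k \<in> blk b}"
  have eqZ: "{(i,j). i < N \<and> j < C * B' \<and> k \<in> blk (j div B')} = {..<N} \<times> J" unfolding J_def by auto
  have inj: "inj_on (\<lambda>(b,p). b * B' + p) (Bs \<times> {..<B'})"
  proof (rule inj_onI)
    fix x y assume x: "x \<in> Bs \<times> {..<B'}" and y: "y \<in> Bs \<times> {..<B'}"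
      and e: "(\<lambda>(b,p). b * B' + p) x = (\<lambda>(b,p). b * B' + p) y"
    obtain b p where xb: "x = (b,p)" "p < B'" using x by auto
    obtain b2 p2 where yb: "y = (b2,p2)" "p2 < B'" using y by auto
    have e2: "b * B' + p = b2 * B' + p2" using e xb yb by simp
    have "b = b2" using arg_cong[OF e2, of "\<lambda>z. z div B'"] div_mod_block(1)[OF xb(2)] div_mod_block(1)[OF yb(2)] by simp
    moreover have "p = p2" using arg_cong[OF e2, of "\<lambda>z. z mod B'"] div_mod_block(2)[OF xb(2)] div_mod_block(2)[OF yb(2)] by simp
    ultimately show "x = y" using xb yb by simp
  qed
  have imJ: "(\<lambda>(b,p). b * B' + p) ` (Bs \<times> {..<B'}) = J"
  proof
    show "(\<lambda>(b,p). b * B' + p) ` (Bs \<times> {..<B'}) \<subseteq> J"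
      unfolding J_def Bs_def by (auto simp: block_lt div_mod_block)
    show "J \<subseteq> (\<lambda>(b,p). b * B' + p) ` (Bs \<times> {..<B'})"
    proof
      fix j assume j: "j \<in> J"
      have "j div B' < C" using j B'0 unfolding J_def by (simp add: less_mult_imp_div_less)
      moreover have "j mod B' < B'" using B'0 by simp
      moreover have "j = (j div B') * B' + j mod B'" by simp
      ultimately show "j \<in> (\<lambda>(b,p). b * B' + p) ` (Bs \<times> {..<B'})"
        using j unfolding J_def Bs_def by (intro image_eqI[of _ _ "(j div B', j mod B')"]) auto
    qed
  qed
  have cJ: "card J = card Bs * B'" using card_image[OF inj] imJ by (simp add: card_cartesian_product)
  have "blk ` Bs = {T\<in>Subs K t. k \<in> T}"
    using bij unfolding Bs_def bij_betw_def by auto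
  moreover have "inj_on blk Bs" using bij unfolding Bs_def bij_betw_def by (auto intro: inj_on_subset)
  ultimately have cB: "card Bs = card {T\<in>Subs K t. k \<in> T}" using card_image by metis
  have "card {(i,j). i < N \<and> j < C * B' \<and> k \<in> blk (j div B')} * K = N * (card {T\<in>Subs K t. k \<in> T} * K) * B'"
    unfolding eqZ card_cartesian_product cJ cB by (simp add: mult_ac)
  also have "\<dots> = N * t * (K choose t) * B'" using card_Subs_mem_mult[OF k, of t] by (simp add: mult_ac)
  also have "\<dots> = N * t * (C * B')"
  proof -
    have "card {..<C} = card (Subs K t)" using bij_betw_same_card[OF bij] .
    then have "C = K choose t" using card_Subs by simp
    then show ?thesis by (simp add: mult_ac)
  qed
  finally show "card {(i,j). i < N \<and> j < C * B' \<and> k \<in> blk (j div B')} * K = N * t * (C * B')" .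
  then show "C = K choose t \<Longrightarrow> card {(i,j). i < N \<and> j < C * B' \<and> k \<in> blk (j div B')} * K = N * t * (C * B')" .
qed



lemma bij_inv1:
  assumes "bij_betw f {..<n} A" "x \<in> A"
  shows "the_inv_into {..<n} f x < n" "f (the_inv_into {..<n} f x) = x"
proof -
  have "inj_on f {..<n}" "f ` {..<n} = A" using assms(1) by (auto simp: bij_betw_def)
  then show "the_inv_into {..<n} f x < n" "f (the_inv_into {..<n} f x) = x"
    using assms(2) the_inv_into_into[of f "{..<n}" x "{..<n}"] f_the_inv_into_f[of f "{..<n}" x] by auto
qed

lemma bij_inv2:
  assumes "bij_betw f {..<n} A" "b < n"
  shows "f b \<in> A" "the_inv_into {..<n} f (f b) = b"
  using assms by (auto simp: bij_betw_def the_inv_into_f_f)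

lemma eps_sq: "eps k S * eps k S = (1::'a::comm_ring_1)"
proof -
  have "((-1::'a) ^ n) * (-1) ^ n = ((-1) * (-1)) ^ n" for n by (simp add: power_mult_distrib)
  then show ?thesis unfolding eps_def by simp
qed

lemma Wm_cong:
  assumes "\<And>i k. i < N \<Longrightarrow> k \<in> S \<Longrightarrow> G i (S - {k}) = G' i (S - {k})"
  shows "Wm D N G S = Wm D N G' S"
  unfolding Wm_def using assms by (intro sum.cong refl) auto

lemma Subs_remove:
  assumes "S \<in> Subs K (Suc t)" "k \<in> S" shows "S - {k} \<in> Subs K t"
  using assms Subs_finite_mem[OF assms(1)] unfolding Subs_def by auto

lemma Subs_insert:
  assumes "T \<in> Subs K t" "k < K" "k \<notin> T" shows "insert k T \<in> Subs K (Suc t)"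
  using assms Subs_finite_mem[OF assms(1)] unfolding Subs_def by auto

definition decf :: "nat \<Rightarrow> nat \<Rightarrow> nat \<Rightarrow> nat \<Rightarrow> (nat \<Rightarrow> nat set) \<Rightarrow> nat \<Rightarrow> nat set \<Rightarrow> (nat \<Rightarrow> nat \<Rightarrow> 'a::comm_ring_1)
   \<Rightarrow> (nat \<Rightarrow> nat set) \<Rightarrow> nat \<Rightarrow> 'a mat \<Rightarrow> nat \<Rightarrow> (nat \<times> nat \<Rightarrow> 'a) \<Rightarrow> (nat \<Rightarrow> 'a) \<Rightarrow> nat \<Rightarrow> 'a" where
  "decf K N t B' blk C L \<alpha> mb mc D k c x j =
    (if k \<in> blk (j div B') then (\<Sum>i<N. D $$ (k,i) * c (i,j))
     else eps k (insert k (blk (j div B'))) *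
       ((if insert k (blk (j div B')) \<inter> L \<noteq> {}
         then x (the_inv_into {..<mc} mb (insert k (blk (j div B'))) * B' + j mod B')
         else - (\<Sum>S'\<in>{S\<in>Subs K (Suc t). S \<inter> L \<noteq> {}}.
                  wdet (vv L \<alpha> (insert k (blk (j div B')))) (Suc t) S' * x (the_inv_into {..<mc} mb S' * B' + j mod B')))
        - (\<Sum>k'\<in>insert k (blk (j div B')) - {k}. eps k' (insert k (blk (j div B'))) *
             (\<Sum>i<N. D $$ (k',i) * c (i, the_inv_into {..<C} blk (insert k (blk (j div B')) - {k'}) * B' + j mod B')))))"

lemma dec_correct:
  fixes D :: "'a::field mat"
  assumes bij: "bij_betw blk {..<C} (Subs K t)" and BB: "B = C * B'" and B'0: "0 < B'"
    and LK: "L \<subseteq> {..<K}"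
    and span: "\<And>k i. k < K \<Longrightarrow> k \<notin> L \<Longrightarrow> i < N \<Longrightarrow> D $$ (k,i) = (\<Sum>l\<in>L. \<alpha> k l * D $$ (l,i))"
    and xW: "\<And>S' p. S' \<in> {S\<in>Subs K (Suc t). S \<inter> L \<noteq> {}} \<Longrightarrow> p < B' \<Longrightarrow>
        x (the_inv_into {..<mc} mb S' * B' + p) = Wm D N (\<lambda>i T. F i (the_inv_into {..<C} blk T * B' + p)) S'"
    and k: "k < K" and j: "j < B"
  shows "decf K N t B' blk C L \<alpha> mb mc D k (uncoded_cache {(i,j). i < N \<and> j < B \<and> k \<in> blk (j div B')} F) x j
         = demanded N D k F j"
proof -
  define Z where "Z = {(i,j). i < N \<and> j < B \<and> k \<in> blk (j div B')}"
  define idx where "idx = the_inv_into {..<C} blk"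
  define b where "b = j div B'"
  define p where "p = j mod B'"
  define T where "T = blk b"
  define G where "G i T' = F i (idx T' * B' + p)" for i T'
  have b: "b < C" using j BB B'0 unfolding b_def by (simp add: less_mult_imp_div_less)
  have p: "p < B'" using B'0 unfolding p_def by simp
  have jbp: "j = b * B' + p" unfolding b_def p_def by simp
  have T: "T \<in> Subs K t" unfolding T_def using bij_inv2[OF bij b] by simp
  have idxT: "idx T = b" unfolding T_def idx_def using bij_inv2[OF bij b] by simp
  have idx_lt: "idx T' < C" "blk (idx T') = T'" if "T' \<in> Subs K t" for T'
    using bij_inv1[OF bij that] unfolding idx_def by auto
  have pos_lt: "idx T' * B' + p < B" if "T' \<in> Subs K t" for T'
    using block_lt[OF idx_lt(1)[OF that] p] BB by simp
  have cache: "uncoded_cache Z F (i, idx T' * B' + p) = G i T'" if "T' \<in> Subs K t" "i < N" "k \<in> T'" for i T'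
  proof -
    have "(idx T' * B' + p) div B' = idx T'" using div_mod_block(1)[OF p] .
    then have "(i, idx T' * B' + p) \<in> Z" unfolding Z_def using that pos_lt[OF that(1)] idx_lt(2)[OF that(1)] by simp
    then show ?thesis unfolding uncoded_cache_def G_def by simp
  qed
  show ?thesis
  proof (cases "k \<in> T")
    case True
    have "(i,j) \<in> Z" if "i < N" for i unfolding Z_def using that j True T_def b_def by simp
    then show ?thesis using True unfolding decf_def demanded_def Z_def[symmetric] T_def b_def uncoded_cache_def
      by (intro if_P[THEN trans] sum.cong refl) auto
  next
    case False
    define S where "S = insert k T"
    have S: "S \<in> Subs K (Suc t)" unfolding S_def using Subs_insert[OF T k False] .
    have fS: "finite S" using Subs_finite_mem[OF S] .
    have SkT: "S - {k} = T" unfolding S_def using False by simp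
    have getW: "x (the_inv_into {..<mc} mb S' * B' + p) = Wm D N G S'" if "S' \<in> {S\<in>Subs K (Suc t). S \<inter> L \<noteq> {}}" for S'
      using xW[OF that p] unfolding G_def idx_def .
    have W: "(if S \<inter> L \<noteq> {} then x (the_inv_into {..<mc} mb S * B' + p)
         else - (\<Sum>S'\<in>{S\<in>Subs K (Suc t). S \<inter> L \<noteq> {}}. wdet (vv L \<alpha> S) (Suc t) S' * x (the_inv_into {..<mc} mb S' * B' + p)))
         = Wm D N G S"
    proof (cases "S \<inter> L \<noteq> {}")
      case True
      then show ?thesis using getW[of S] S by simp
    next
      case False
      have dis: "S \<inter> L = {}" using False by simp
      have sp: "D $$ (k',i) = (\<Sum>l\<in>L. \<alpha> k' l * D $$ (l,i))" if "k' \<in> S" "i < N" for k' i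
      proof -
        have "k' < K" using S that(1) unfolding Subs_def by auto
        moreover have "k' \<notin> L" using dis that(1) by blast
        ultimately show ?thesis using span that(2) by blast
      qed
      have "Wm D N G S = - (\<Sum>S'\<in>{S\<in>Subs K (Suc t). S \<inter> L \<noteq> {}}. wdet (vv L \<alpha> S) (Suc t) S' * Wm D N G S')"
        by (rule decode_identity[OF LK S dis sp])
      also have "\<dots> = - (\<Sum>S'\<in>{S\<in>Subs K (Suc t). S \<inter> L \<noteq> {}}. wdet (vv L \<alpha> S) (Suc t) S' * x (the_inv_into {..<mc} mb S' * B' + p))"
        using getW by (intro arg_cong[where f=uminus] sum.cong refl) simp
      finally show ?thesis using False by simp
    qed
    have rest: "(\<Sum>k'\<in>S - {k}. eps k' S * (\<Sum>i<N. D $$ (k',i) * uncoded_cache Z F (i, idx (S - {k'}) * B' + p)))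
        = (\<Sum>k'\<in>S - {k}. eps k' S * (\<Sum>i<N. D $$ (k',i) * G i (S - {k'})))"
    proof (intro sum.cong refl arg_cong2[where f="(*)"])
      fix k' i assume k': "k' \<in> S - {k}" and i: "i \<in> {..<N}"
      have "S - {k'} \<in> Subs K t" using Subs_remove[OF S] k' by simp
      moreover have "k \<in> S - {k'}" using k' unfolding S_def by auto
      ultimately show "uncoded_cache Z F (i, idx (S - {k'}) * B' + p) = G i (S - {k'})"
        using cache i by simp
    qed
    have "Wm D N G S = eps k S * (\<Sum>i<N. D $$ (k,i) * G i T) + (\<Sum>k'\<in>S - {k}. eps k' S * (\<Sum>i<N. D $$ (k',i) * G i (S - {k'})))"
    proof -
      have kS: "k \<in> S" unfolding S_def by simp
      show ?thesis unfolding Wm_def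
        using sum.remove[OF fS kS, of "\<lambda>k'. eps k' S * (\<Sum>i<N. D $$ (k',i) * G i (S - {k'}))"] SkT by simp
    qed
    then have main: "eps k S * (Wm D N G S - (\<Sum>k'\<in>S - {k}. eps k' S * (\<Sum>i<N. D $$ (k',i) * G i (S - {k'}))))
        = (\<Sum>i<N. D $$ (k,i) * G i T)"
      by (simp add: mult.assoc[symmetric] eps_sq)
    have "decf K N t B' blk C L \<alpha> mb mc D k (uncoded_cache Z F) x j
        = eps k S * (Wm D N G S - (\<Sum>k'\<in>S - {k}. eps k' S * (\<Sum>i<N. D $$ (k',i) * uncoded_cache Z F (i, idx (S - {k'}) * B' + p))))"
      using False W unfolding decf_def S_def T_def b_def p_def idx_def by simp
    also have "\<dots> = (\<Sum>i<N. D $$ (k,i) * G i T)" unfolding rest main ..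
    also have "\<dots> = demanded N D k F j" unfolding demanded_def G_def idxT jbp ..
    finally show ?thesis unfolding Z_def .
  qed
qed




definition encf :: "nat \<Rightarrow> nat \<Rightarrow> (nat \<Rightarrow> nat set) \<Rightarrow> nat \<Rightarrow> (nat \<Rightarrow> nat set) \<Rightarrow> nat \<Rightarrow> 'a::comm_ring_1 mat
    \<Rightarrow> (nat \<Rightarrow> nat \<Rightarrow> 'a) \<Rightarrow> nat \<Rightarrow> 'a" where
  "encf N B' blk C mb mc D G pos = (if pos < mc * B'
     then Wm D N (\<lambda>i T. G i (the_inv_into {..<C} blk T * B' + pos mod B')) (mb (pos div B')) else 0)"

theorem theorem1:
  fixes K N t B :: nat
  assumes "0 < K" and "0 < N" and "t \<le> K"
    and "0 < B" and "(K choose t) dvd B"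
  shows "\<exists>(Z :: nat \<Rightarrow> (nat \<times> nat) set)
           (L :: 'a::{finite,field} mat \<Rightarrow> nat)
           (enc :: 'a mat \<Rightarrow> (nat \<Rightarrow> nat \<Rightarrow> 'a) \<Rightarrow> nat \<Rightarrow> 'a)
           (dec :: 'a mat \<Rightarrow> nat \<Rightarrow> (nat \<times> nat \<Rightarrow> 'a) \<Rightarrow> (nat \<Rightarrow> 'a) \<Rightarrow> nat \<Rightarrow> 'a).
     (\<forall>k<K. Z k \<subseteq> {..<N} \<times> {..<B} \<and>
            real (card (Z k)) = (real N * real t / real K) * real B)
   \<and> (\<forall>D \<in> carrier_mat K N.
        real (L D) / real B
          = (real (K choose (t + 1)) - real ((K - rank_q D) choose (t + 1)))
            / real (K choose t)
      \<and> (\<forall>F. \<forall>k<K. \<forall>j<B.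
            dec D k (uncoded_cache (Z k) F) (transmit (L D) (enc D (trunc_files N B F))) j
              = demanded N D k F j))
   \<and> (\<forall>D \<in> carrier_mat K N.
        real (L D) / real B
          \<le> (real (K choose (t + 1)) - real ((K - min K N) choose (t + 1))) / real (K choose t))
   \<and> (\<forall>D \<in> carrier_mat K N. rank_q D = min K N \<longrightarrow>
        real (L D) / real B
          = (real (K choose (t + 1)) - real ((K - min K N) choose (t + 1))) / real (K choose t))
   \<and> (\<exists>D :: 'a mat. D \<in> carrier_mat K N \<and> rank_q D = min K N)"
proof -
  define C where "C = K choose t"
  have C0: "0 < C" unfolding C_def using assms(3) by simp
  define B' where "B' = B div C"
  have BB: "B = C * B'" unfolding B'_def C_def using assms(5) by simp
  have B'0: "0 < B'" using assms(4) BB by (cases "B' = 0") auto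
  obtain blk where bij: "bij_betw blk {..<C} (Subs K t)"
    using finite_same_card_bij[of "{..<C}" "Subs K t"] card_Subs[of K t] unfolding C_def by auto
  define Msg where "Msg L = {S\<in>Subs K (Suc t). S \<inter> L \<noteq> {}}" for L
  have finMsg: "finite (Msg L)" for L unfolding Msg_def by simp
  define good where "good D L \<alpha> \<longleftrightarrow> L \<subseteq> {..<K} \<and> card L \<le> rank_q D \<and>
      (\<forall>k<K. k \<notin> L \<longrightarrow> (\<forall>i<N. D $$ (k,i) = (\<Sum>l\<in>L. \<alpha> k l * D $$ (l,i))))"
    for D :: "'a mat" and L :: "nat set" and \<alpha> :: "nat \<Rightarrow> nat \<Rightarrow> 'a"
  have "\<forall>D. \<exists>p. D \<in> carrier_mat K N \<longrightarrow> good D (fst p) (snd p)"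
  proof
    fix D :: "'a mat"
    show "\<exists>p. D \<in> carrier_mat K N \<longrightarrow> good D (fst p) (snd p)"
    proof (cases "D \<in> carrier_mat K N")
      case True
      then obtain L \<alpha> where L: "L \<subseteq> {..<K} \<and> card L \<le> vec_space.rank K D \<and>
           (\<forall>k<K. k \<notin> L \<longrightarrow> (\<forall>i<N. D $$ (k,i) = (\<Sum>l\<in>L. \<alpha> k l * D $$ (l,i))))"
        using leaders_exist[OF True] by blast
      have "dim_row D = K" using True by simp
      then have "good D L \<alpha>" using L unfolding good_def by simp
      then show ?thesis by (intro exI[of _ "(L,\<alpha>)"]) simp
    qed simp
  qed
  from choice[OF this] obtain LA where LA: "\<forall>D. D \<in> carrier_mat K N \<longrightarrow> good D (fst (LA D)) (snd (LA D))"
    by blast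
  define Ls where "Ls D = fst (LA D)" for D
  define al where "al D = snd (LA D)" for D
  have "\<forall>D. \<exists>mb. bij_betw mb {..<card (Msg (Ls D))} (Msg (Ls D))"
    using finite_same_card_bij[of "{..<card (Msg (Ls _))}" "Msg (Ls _)"] finMsg by auto
  from choice[OF this] obtain mbf where mbf: "\<forall>D. bij_betw (mbf D) {..<card (Msg (Ls D))} (Msg (Ls D))"
    by blast
  define mc where "mc D = card (Msg (Ls D))" for D
  define Ld where "Ld D = B' * ((K choose Suc t) - ((K - rank_q D) choose Suc t))" for D :: "'a mat"
  define Z where "Z k = {(i,j). i < N \<and> j < B \<and> k \<in> blk (j div B')}" for k
  define enc where "enc D G = encf N B' blk C (mbf D) (mc D) D G" for D :: "'a mat" and G
  define dec where "dec D k c x j = decf K N t B' blk C (Ls D) (al D) (mbf D) (mc D) D k c x j"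
    for D :: "'a mat" and k c x j
  have load: "real (Ld D) / real B = (real (K choose (t + 1)) - real ((K - rank_q D) choose (t + 1))) / real (K choose t)"
    for D :: "'a mat"
  proof -
    have le: "(K - rank_q D) choose Suc t \<le> K choose Suc t" by (rule binom_mono_n) simp
    have "real (Ld D) / real B = real (B' * ((K choose Suc t) - ((K - rank_q D) choose Suc t))) / real (C * B')"
      unfolding Ld_def BB ..
    also have "\<dots> = real ((K choose Suc t) - ((K - rank_q D) choose Suc t)) / real C"
      using B'0 by (simp add: field_simps)
    also have "\<dots> = (real (K choose (t + 1)) - real ((K - rank_q D) choose (t + 1))) / real (K choose t)"
      using le unfolding C_def by (simp add: of_nat_diff)
    finally show ?thesis .
  qed
  have c1: "\<forall>k<K. Z k \<subseteq> {..<N} \<times> {..<B} \<and> real (card (Z k)) = (real N * real t / real K) * real B"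
  proof (intro allI impI conjI)
    fix k assume k: "k < K"
    show "Z k \<subseteq> {..<N} \<times> {..<B}" unfolding Z_def by auto
    have "card (Z k) * K = N * t * B" unfolding Z_def BB using cache_card(1)[OF bij k B'0, of N] .
    then have "real (card (Z k)) * real K = real N * real t * real B" by (metis of_nat_mult)
    then show "real (card (Z k)) = (real N * real t / real K) * real B"
      using k by (simp add: field_simps)
  qed
  have c2: "\<forall>D \<in> carrier_mat K N.
        real (Ld D) / real B
          = (real (K choose (t + 1)) - real ((K - rank_q D) choose (t + 1)))
            / real (K choose t)
      \<and> (\<forall>F. \<forall>k<K. \<forall>j<B.
            dec D k (uncoded_cache (Z k) F) (transmit (Ld D) (enc D (trunc_files N B F))) j
              = demanded N D k F j)"
  proof (intro ballI conjI allI impI)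
    fix D :: "'a mat" assume D: "D \<in> carrier_mat K N"
    show "real (Ld D) / real B = (real (K choose (t + 1)) - real ((K - rank_q D) choose (t + 1))) / real (K choose t)"
      by (rule load)
    fix F k j assume k: "k < K" and j: "j < B"
    have gd: "good D (Ls D) (al D)" using LA D unfolding Ls_def al_def by blast
    have LK: "Ls D \<subseteq> {..<K}" and cL: "card (Ls D) \<le> rank_q D"
      and span: "\<And>k i. k < K \<Longrightarrow> k \<notin> Ls D \<Longrightarrow> i < N \<Longrightarrow> D $$ (k,i) = (\<Sum>l\<in>Ls D. al D k l * D $$ (l,i))"
      using gd unfolding good_def by auto
    have mcle: "mc D * B' \<le> Ld D"
    proof -
      have "mc D = (K choose Suc t) - ((K - card (Ls D)) choose Suc t)"
        unfolding mc_def Msg_def using card_Msg[OF LK] .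
      moreover have "(K - rank_q D) choose Suc t \<le> (K - card (Ls D)) choose Suc t"
        by (rule binom_mono_n) (use cL in simp)
      ultimately have "mc D \<le> (K choose Suc t) - ((K - rank_q D) choose Suc t)" by simp
      then show ?thesis unfolding Ld_def by (simp add: mult.commute)
    qed
    define x where "x = transmit (Ld D) (enc D (trunc_files N B F))"
    have bm: "bij_betw (mbf D) {..<mc D} (Msg (Ls D))" using mbf unfolding mc_def by blast
    have xW: "x (the_inv_into {..<mc D} (mbf D) S' * B' + p) = Wm D N (\<lambda>i T. F i (the_inv_into {..<C} blk T * B' + p)) S'"
      if S': "S' \<in> {S\<in>Subs K (Suc t). S \<inter> Ls D \<noteq> {}}" and p: "p < B'" for S' p
    proof -
      define a where "a = the_inv_into {..<mc D} (mbf D) S'"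
      have S'M: "S' \<in> Msg (Ls D)" using S' unfolding Msg_def .
      have a: "a < mc D" "mbf D a = S'" using bij_inv1[OF bm S'M] unfolding a_def by auto
      have pos: "a * B' + p < Ld D" using block_lt[OF a(1) p] mcle by simp
      have pos2: "a * B' + p < mc D * B'" using block_lt[OF a(1) p] .
      have "x (a * B' + p) = Wm D N (\<lambda>i T. trunc_files N B F i (the_inv_into {..<C} blk T * B' + p)) S'"
        unfolding x_def transmit_def enc_def encf_def using pos pos2 a(2) div_mod_block[OF p] by simp
      also have "\<dots> = Wm D N (\<lambda>i T. F i (the_inv_into {..<C} blk T * B' + p)) S'"
      proof (rule Wm_cong)
        fix i k' assume i: "i < N" and k': "k' \<in> S'"
        have "S' - {k'} \<in> Subs K t" using Subs_remove[OF _ k'] S' by simp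
        then have "the_inv_into {..<C} blk (S' - {k'}) < C" using bij_inv1[OF bij] by blast
        then have "the_inv_into {..<C} blk (S' - {k'}) * B' + p < B" using block_lt[OF _ p] BB by simp
        then show "trunc_files N B F i (the_inv_into {..<C} blk (S' - {k'}) * B' + p) = F i (the_inv_into {..<C} blk (S' - {k'}) * B' + p)"
          unfolding trunc_files_def using i by simp
      qed
      finally show ?thesis unfolding a_def .
    qed
    have "decf K N t B' blk C (Ls D) (al D) (mbf D) (mc D) D k (uncoded_cache {(i,j). i < N \<and> j < B \<and> k \<in> blk (j div B')} F) x j
         = demanded N D k F j"
      by (rule dec_correct[OF bij BB B'0 LK span xW k j])
    then show "dec D k (uncoded_cache (Z k) F) (transmit (Ld D) (enc D (trunc_files N B F))) j = demanded N D k F j"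
      unfolding dec_def Z_def x_def .
  qed
  have c3: "\<forall>D \<in> carrier_mat K N.
        real (Ld D) / real B
          \<le> (real (K choose (t + 1)) - real ((K - min K N) choose (t + 1))) / real (K choose t)"
  proof
    fix D :: "'a mat" assume D: "D \<in> carrier_mat K N"
    have "rank_q D \<le> N" using rank_le_cols[OF D] D by simp
    then have "K - min K N \<le> K - rank_q D" by simp
    then have "(K - min K N) choose (t + 1) \<le> (K - rank_q D) choose (t + 1)" by (rule binom_mono_n)
    then have "real (K choose (t + 1)) - real ((K - rank_q D) choose (t + 1)) \<le> real (K choose (t + 1)) - real ((K - min K N) choose (t + 1))"
      by simp
    then show "real (Ld D) / real B \<le> (real (K choose (t + 1)) - real ((K - min K N) choose (t + 1))) / real (K choose t)"
      unfolding load by (intro divide_right_mono) simp_all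
  qed
  have c4: "\<forall>D \<in> carrier_mat K N. rank_q D = min K N \<longrightarrow>
        real (Ld D) / real B
          = (real (K choose (t + 1)) - real ((K - min K N) choose (t + 1))) / real (K choose t)"
    using load by simp
  have c5: "\<exists>D :: 'a mat. D \<in> carrier_mat K N \<and> rank_q D = min K N"
  proof -
    obtain D :: "'a mat" where "D \<in> carrier_mat K N" "vec_space.rank K D = min K N"
      using exists_full_rank by blast
    then show ?thesis by (intro exI[of _ D]) simp
  qed
  show ?thesis
    by (intro exI[of _ Z] exI[of _ Ld] exI[of _ enc] exI[of _ dec]) (use c1 c2 c3 c4 c5 in blast)
qed


end
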